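(* Let $(X,d)$ be a geodesic space with $\operatorname{Curv}X\ge\kappa$ for some $\kappa\in\mathbb{R}$. Then $X$ is non-branching.
   Context: Let $(M^2_\kappa,d_\kappa)$ be the model plane of constant curvature $\kappa$. For a triangle $(a_1,a_2,a_3)$ in $X$, a comparison triangle is $(\bar a_1,\bar a_2,\bar a_3)$ in $M^2_\kappa$ with $d_\kappa(\bar a_i,\bar a_j)=d(a_i,a_j)$. The circumradius is $r(a_1,a_2,a_3)=\inf_{x\in X}\max_i d(x,a_i)$, and $r(\bar a_1,\bar a_2,\bar a_3)=\inf_{x\in M^2_\kappa}\max_i d_\kappa(x,\bar a_i)$. $\operatorname{Curv}X\ge\kappa$ means $r(a_1,a_2,a_3)\ge r(\bar a_1,\bar a_2,\bar a_3)$ for all triangles in $X$ (for $\kappa>0$ only for triangles whose comparison triangle lies in some ball of radius $\frac{\pi}{2\sqrt\kappa}$). For $t\in[0,1]$ let $Z_t(x,y)=\{z\in X: d(x,z)=t\,d(x,y),\ d(z,y)=(1-t)d(x,y)\}$. A geodesic space is non-branching if for all $x,y,y'\in X$ with $d(x,y)=d(x,y')$, the condition $Z_t(x,y)\cap Z_t(x,y')\neq\emptyset$ for some $t\in(0,1)$ implies $y=y'$. *)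

theory Defs
  imports "HOL-Analysis.Analysis"
begin

text \<open>Model plane of constant curvature k, realised in R^3 (triples):
  k = 0: the Euclidean plane z = 0;
  k > 0: the round sphere of radius 1/sqrt k with its intrinsic (angular) metric;
  k < 0: the upper sheet of the hyperboloid x^2+y^2-z^2 = 1/k with the hyperbolic metric.\<close>

type_synonym pt3 = "real \<times> real \<times> real"

definition model_space :: "real \<Rightarrow> pt3 set" where
  "model_space k =
     (if k = 0 then {(x,y,z). z = 0}
      else if k > 0 then {(x,y,z). x^2 + y^2 + z^2 = 1 / k}
      else {(x,y,z). x^2 + y^2 - z^2 = 1 / k \<and> z > 0})"

definition model_dist :: "real \<Rightarrow> pt3 \<Rightarrow> pt3 \<Rightarrow> real" where
  "model_dist k p q =
     (case p of (x1,y1,z1) \<Rightarrow> case q of (x2,y2,z2) \<Rightarrow>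
       if k = 0 then sqrt ((x1-x2)^2 + (y1-y2)^2 + (z1-z2)^2)
       else if k > 0 then arccos (max (-1) (min 1 (k * (x1*x2 + y1*y2 + z1*z2)))) / sqrt k
       else arcosh (max 1 (k * (x1*x2 + y1*y2 - z1*z2))) / sqrt (- k))"

definition geodesic_space :: "'a::metric_space itself \<Rightarrow> bool" where
  "geodesic_space _ \<longleftrightarrow>
     (\<forall>x y::'a. \<exists>\<gamma>::real \<Rightarrow> 'a. \<gamma> 0 = x \<and> \<gamma> (dist x y) = y \<and>
        (\<forall>s\<in>{0..dist x y}. \<forall>t\<in>{0..dist x y}. dist (\<gamma> s) (\<gamma> t) = \<bar>s - t\<bar>))"

definition circumradius :: "'a::metric_space \<Rightarrow> 'a \<Rightarrow> 'a \<Rightarrow> real" where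
  "circumradius a1 a2 a3 = (INF x\<in>UNIV. max (dist x a1) (max (dist x a2) (dist x a3)))"

definition model_circumradius :: "real \<Rightarrow> pt3 \<Rightarrow> pt3 \<Rightarrow> pt3 \<Rightarrow> real" where
  "model_circumradius k b1 b2 b3 =
     (INF x\<in>model_space k. max (model_dist k x b1) (max (model_dist k x b2) (model_dist k x b3)))"

definition comparison_triangle :: "real \<Rightarrow> 'a::metric_space \<Rightarrow> 'a \<Rightarrow> 'a \<Rightarrow> pt3 \<Rightarrow> pt3 \<Rightarrow> pt3 \<Rightarrow> bool" where
  "comparison_triangle k a1 a2 a3 b1 b2 b3 \<longleftrightarrow>
     b1 \<in> model_space k \<and> b2 \<in> model_space k \<and> b3 \<in> model_space k \<and>
     model_dist k b1 b2 = dist a1 a2 \<and> model_dist k b1 b3 = dist a1 a3 \<and>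
     model_dist k b2 b3 = dist a2 a3"

text \<open>Curv X \<ge> k in the circumradius sense; for k > 0 only triangles whose comparison
  triangle lies in some (open) ball of radius pi/(2 sqrt k) are required.\<close>
definition curv_ge :: "'a::metric_space itself \<Rightarrow> real \<Rightarrow> bool" where
  "curv_ge _ k \<longleftrightarrow>
     (\<forall>(a1::'a) a2 a3 b1 b2 b3. comparison_triangle k a1 a2 a3 b1 b2 b3 \<longrightarrow>
        (k > 0 \<longrightarrow> (\<exists>c\<in>model_space k. model_dist k c b1 < pi / (2 * sqrt k) \<and>
                       model_dist k c b2 < pi / (2 * sqrt k) \<and>
                       model_dist k c b3 < pi / (2 * sqrt k))) \<longrightarrow>
        circumradius a1 a2 a3 \<ge> model_circumradius k b1 b2 b3)"

definition Zt :: "real \<Rightarrow> 'a::metric_space \<Rightarrow> 'a \<Rightarrow> 'a set" where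
  "Zt t x y = {z. dist x z = t * dist x y \<and> dist z y = (1 - t) * dist x y}"

definition non_branching :: "'a::metric_space itself \<Rightarrow> bool" where
  "non_branching _ \<longleftrightarrow>
     (\<forall>x y y'::'a. dist x y = dist x y' \<longrightarrow>
        (\<exists>t\<in>{0<..<1}. Zt t x y \<inter> Zt t x y' \<noteq> {}) \<longrightarrow> y = y')"

end

theory Submission
  imports Defs
begin


lemma circ_lower:
  assumes "b1 \<in> model_space k"
    and "\<And>p. p \<in> model_space k \<Longrightarrow> c \<le> max (model_dist k p b1) (max (model_dist k p b2) (model_dist k p b3))"
  shows "c \<le> model_circumradius k b1 b2 b3"
  unfolding model_circumradius_def using assms by (intro cINF_greatest) auto

lemma max3_ge:
  fixes d1 d2 d3 c :: real
  assumes "c \<le> d1 \<or> c \<le> d2 \<or> c \<le> d3"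
  shows "c \<le> max d1 (max d2 d3)"
  using assms by auto

lemma sqrt_4sq: "(h::real) > 0 \<Longrightarrow> sqrt (4*h^2) = 2*h"
proof -
  assume "h > 0"
  have "4*h^2 = (2*h)^2" by (simp add: power_mult_distrib)
  hence "sqrt (4*h^2) = \<bar>2*h\<bar>" by (simp only: real_sqrt_abs)
  thus ?thesis using \<open>h>0\<close> by simp
qed

lemma euclid_case:
  assumes "h > 0" "0 < e" "e \<le> 2*h"
  shows "\<exists>b1 b2 b3. b1 \<in> model_space 0 \<and> b2 \<in> model_space 0 \<and> b3 \<in> model_space 0 \<and>
     model_dist 0 b1 b2 = 2*h \<and> model_dist 0 b1 b3 = 2*h \<and> model_dist 0 b2 b3 = e \<and>
     model_circumradius 0 b1 b2 b3 > h"
proof -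
  define H where "H = sqrt (4*h^2 - e^2/4)"
  have Hsq: "H^2 = 4*h^2 - e^2/4" unfolding H_def
  proof (intro real_sqrt_pow2)
    have "e^2 \<le> (2*h)^2" using assms by (intro power_mono) auto
    hence "e^2 \<le> 4*h^2" by (simp add: power_mult_distrib)
    moreover have "0 \<le> h^2" by simp
    ultimately show "0 \<le> 4*h^2 - e^2/4" by linarith
  qed
  define b1 :: pt3 where "b1 = (0, H, 0)"
  define b2 :: pt3 where "b2 = (e/2, 0, 0)"
  define b3 :: pt3 where "b3 = (-e/2, 0, 0)"
  have d12: "model_dist 0 b1 b2 = 2*h"
  proof -
    have "(0 - e/2)^2 + (H - 0)^2 + (0-0)^2 = (2*h)^2" using Hsq by (simp add: power2_eq_square algebra_simps)
    thus ?thesis unfolding b1_def b2_def model_dist_def using assms by (simp add: sqrt_4sq)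
  qed
  have d13: "model_dist 0 b1 b3 = 2*h"
  proof -
    have "(0 - -e/2)^2 + (H - 0)^2 + (0-0)^2 = (2*h)^2" using Hsq by (simp add: power2_eq_square algebra_simps)
    thus ?thesis unfolding b1_def b3_def model_dist_def using assms by (simp add: sqrt_4sq)
  qed
  have d23: "model_dist 0 b2 b3 = e"
  proof -
    have "(e/2 - -e/2)^2 + (0 - 0)^2 + (0-0)^2 = e^2" by (simp add: power2_eq_square algebra_simps)
    thus ?thesis unfolding b2_def b3_def model_dist_def using assms by simp
  qed
  define c where "c = sqrt (h^2 + e^2/16)"
  have ch: "h < c" unfolding c_def using assms
    by (intro real_less_rsqrt) simp
  have "c \<le> model_circumradius 0 b1 b2 b3"
  proof (rule circ_lower)
    show "b1 \<in> model_space 0" unfolding b1_def model_space_def by simp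
  next
    fix p assume "p \<in> model_space 0"
    obtain x y z where p: "p = (x,y,z)" by (cases p) auto
    define S1 where "S1 = (x - 0)^2 + (y - H)^2 + (z - 0)^2"
    define S2 where "S2 = (x - e/2)^2 + (y - 0)^2 + (z - 0)^2"
    define S3 where "S3 = (x - -e/2)^2 + (y - 0)^2 + (z - 0)^2"
    have m1: "model_dist 0 p b1 = sqrt S1" unfolding p b1_def model_dist_def S1_def by simp
    have m2: "model_dist 0 p b2 = sqrt S2" unfolding p b2_def model_dist_def S2_def by simp
    have m3: "model_dist 0 p b3 = sqrt S3" unfolding p b3_def model_dist_def S3_def by simp
    have id: "S1/2 + S2/4 + S3/4 = (x^2 + (y - H/2)^2 + z^2) + (h^2 + e^2/16)"
    proof -
      have "S1/2 + S2/4 + S3/4 = (x^2 + (y - H/2)^2 + z^2) + H^2/4 + e^2/8"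
        unfolding S1_def S2_def S3_def by (simp add: power2_eq_square field_simps)
      thus ?thesis using Hsq by (simp add: field_simps)
    qed
    have "h^2 + e^2/16 \<le> S1 \<or> h^2 + e^2/16 \<le> S2 \<or> h^2 + e^2/16 \<le> S3"
    proof (rule ccontr)
      assume "\<not> ?thesis"
      hence "S1/2 + S2/4 + S3/4 < h^2 + e^2/16" by auto
      moreover have "0 \<le> x^2 + (y - H/2)^2 + z^2" by simp
      ultimately show False using id by linarith
    qed
    hence "c \<le> sqrt S1 \<or> c \<le> sqrt S2 \<or> c \<le> sqrt S3" unfolding c_def
      using real_sqrt_le_mono by blast
    thus "c \<le> max (model_dist 0 p b1) (max (model_dist 0 p b2) (model_dist 0 p b3))"
      unfolding m1 m2 m3 by (rule max3_ge)
  qed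
  hence "model_circumradius 0 b1 b2 b3 > h" using ch by linarith
  moreover have "b1 \<in> model_space 0" "b2 \<in> model_space 0" "b3 \<in> model_space 0"
    unfolding b1_def b2_def b3_def model_space_def by auto
  ultimately show ?thesis using d12 d13 d23 by blast
qed



lemma md_pos: "k>0 \<Longrightarrow> model_dist k (x1,y1,z1) (x2,y2,z2) = arccos (max (-1) (min 1 (k*(x1*x2+y1*y2+z1*z2)))) / sqrt k"
  by (simp add: model_dist_def)
lemma md_neg: "k<0 \<Longrightarrow> model_dist k (x1,y1,z1) (x2,y2,z2) = arcosh (max 1 (k*(x1*x2+y1*y2-z1*z2))) / sqrt (-k)"
  by (simp add: model_dist_def)

lemma arccos_clip_ge: "t \<le> K \<Longrightarrow> -1 \<le> K \<Longrightarrow> K \<le> 1 \<Longrightarrow> arccos K \<le> arccos (max (-1) (min 1 t))"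
  by (rule arccos_le_arccos) auto

lemma sphere_case:
  assumes k: "k > 0" and h: "h > 0" and e: "0 < e" "e \<le> 2*h" and small: "4*h* sqrt k < pi"
  shows "\<exists>b1 b2 b3. b1 \<in> model_space k \<and> b2 \<in> model_space k \<and> b3 \<in> model_space k \<and>
     model_dist k b1 b2 = 2*h \<and> model_dist k b1 b3 = 2*h \<and> model_dist k b2 b3 = e \<and>
     (\<exists>c\<in>model_space k. model_dist k c b1 < pi / (2 * sqrt k) \<and>
                       model_dist k c b2 < pi / (2 * sqrt k) \<and>
                       model_dist k c b3 < pi / (2 * sqrt k)) \<and>
     model_circumradius k b1 b2 b3 > h"
proof -
  define sk where "sk = sqrt k"
  have sk_pos: "sk > 0" unfolding sk_def using k by simp
  have sksq: "sk * sk = k" unfolding sk_def using k by simp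
  define R where "R = 1 / sk"
  have R: "R > 0" unfolding R_def using sk_pos by simp
  have kR: "k * (R * R) = 1" unfolding R_def using sk_pos sksq[symmetric] by (simp add: field_simps)
  define \<alpha> where "\<alpha> = 2*h* sk"
  define \<beta> where "\<beta> = e* sk"
  have \<beta>0: "0 < \<beta>" unfolding \<beta>_def using e sk_pos by simp
  have \<beta>\<alpha>: "\<beta> \<le> \<alpha>" unfolding \<beta>_def \<alpha>_def using e sk_pos by (intro mult_right_mono) auto
  have \<alpha>pi: "\<alpha> < pi/2" unfolding \<alpha>_def sk_def using small by simp
  define c where "c = cos \<alpha>"
  have c0: "0 \<le> c" unfolding c_def using \<alpha>pi \<beta>0 \<beta>\<alpha> by (intro cos_ge_zero) auto
  have cle: "c \<le> cos (\<beta>/2)" unfolding c_def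
    using \<alpha>pi \<beta>0 \<beta>\<alpha> by (intro cos_monotone_0_pi_le) auto
  define v where "v = sin (\<beta>/2)"
  define u where "u = sqrt (cos (\<beta>/2)^2 - c^2)"
  have usq: "u^2 = cos (\<beta>/2)^2 - c^2" unfolding u_def
  proof (intro real_sqrt_pow2)
    have "c^2 \<le> cos (\<beta>/2)^2" using c0 cle by (intro power_mono) auto
    thus "0 \<le> cos (\<beta>/2)^2 - c^2" by simp
  qed
  have sc: "sin (\<beta>/2)^2 + cos (\<beta>/2)^2 = 1" by simp
  have cb: "cos \<beta> = cos (\<beta>/2)^2 - sin (\<beta>/2)^2" using cos_double[of "\<beta>/2"] by simp
  define b1 :: pt3 where "b1 = (0, 0, R)"
  define b2 :: pt3 where "b2 = (R*u, R* v, R*c)"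
  define b3 :: pt3 where "b3 = (R*u, -(R* v), R*c)"
  have R2: "R^2 = 1/k" using kR k by (simp add: power2_eq_square field_simps)
  have ms1: "b1 \<in> model_space k" unfolding b1_def model_space_def using k R2 by simp
  have "(R*u)^2 + (R* v)^2 + (R*c)^2 = R^2 * (u^2 + v^2 + c^2)" by (simp add: power_mult_distrib algebra_simps)
  also have "u^2 + v^2 + c^2 = 1" using usq sc unfolding v_def by simp
  finally have sq23: "(R*u)^2 + (R* v)^2 + (R*c)^2 = 1/k" using R2 by simp
  have ms2: "b2 \<in> model_space k" unfolding b2_def model_space_def using k sq23 by simp
  have ms3: "b3 \<in> model_space k" unfolding b3_def model_space_def using k sq23 by simp
  have ip12: "k*(0*(R*u) + 0*(R* v) + R*(R*c)) = c" using kR by (simp add: algebra_simps)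
  have ip13: "k*(0*(R*u) + 0*(-(R* v)) + R*(R*c)) = c" using kR by (simp add: algebra_simps)
  have ip23: "k*((R*u)*(R*u) + (R* v)*(-(R* v)) + (R*c)*(R*c)) = cos \<beta>"
  proof -
    have "k*((R*u)*(R*u) + (R* v)*(-(R* v)) + (R*c)*(R*c)) = (k*(R*R)) * (u^2 - v^2 + c^2)"
      by (simp add: power2_eq_square algebra_simps)
    also have "\<dots> = u^2 - v^2 + c^2" using kR by simp
    also have "\<dots> = cos \<beta>" using usq cb unfolding v_def by simp
    finally show ?thesis .
  qed
  have ip11: "k*(0*0 + 0*0 + R*R) = 1" using kR by simp
  have cm1: "-1 \<le> c" "c \<le> 1" unfolding c_def by auto
  have d12: "model_dist k b1 b2 = 2*h"
    unfolding b1_def b2_def md_pos[OF k] ip12 using cm1 \<alpha>pi \<beta>0 \<beta>\<alpha>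
    by (simp add: c_def arccos_cos \<alpha>_def sk_def[symmetric]) (use sk_pos in simp)
  have d13: "model_dist k b1 b3 = 2*h"
    unfolding b1_def b3_def md_pos[OF k] ip13 using cm1 \<alpha>pi \<beta>0 \<beta>\<alpha>
    by (simp add: c_def arccos_cos \<alpha>_def sk_def[symmetric]) (use sk_pos in simp)
  have d23: "model_dist k b2 b3 = e"
    unfolding b2_def b3_def md_pos[OF k] ip23 using \<alpha>pi \<beta>0 \<beta>\<alpha>
    by (simp add: arccos_cos \<beta>_def sk_def[symmetric]) (use sk_pos in simp)
  have d11: "model_dist k b1 b1 = 0" unfolding b1_def md_pos[OF k] ip11 by simp
  have hb: "2*h < pi / (2 * sqrt k)" using small sk_pos unfolding sk_def[symmetric] by (simp add: field_simps)
  have ball: "\<exists>c\<in>model_space k. model_dist k c b1 < pi / (2 * sqrt k) \<and>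
                       model_dist k c b2 < pi / (2 * sqrt k) \<and>
                       model_dist k c b3 < pi / (2 * sqrt k)"
    using ms1 d11 d12 d13 hb k by (intro bexI[of _ b1]) auto
  define A where "A = u/2"
  define B where "B = (1+c)/2"
  define K where "K = sqrt (A^2 + B^2)"
  have K0: "0 \<le> K" unfolding K_def by simp
  have ca2: "cos (\<alpha>/2)^2 = (1+c)/2"
    using cos_double_cos[of "\<alpha>/2"] unfolding c_def by simp
  have ca0: "0 < cos (\<alpha>/2)" using \<alpha>pi \<beta>0 \<beta>\<alpha> by (intro cos_gt_zero) auto
  have sb0: "0 < sin (\<beta>/2)" using \<alpha>pi \<beta>0 \<beta>\<alpha> by (intro sin_gt_zero) auto
  have Kc: "K < cos (\<alpha>/2)"
  proof (rule power_less_imp_less_base[of _ 2])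
    have "K^2 = A^2 + B^2" unfolding K_def by simp
    also have "\<dots> = (u^2 + (1+c)^2)/4" unfolding A_def B_def by (simp add: power_divide field_simps)
    also have "\<dots> = (cos (\<beta>/2)^2 + 1 + 2*c)/4" using usq by (simp add: power2_eq_square field_simps)
    also have "\<dots> < (1+c)/2"
    proof -
      have "sin (\<beta>/2)^2 > 0" using sb0 by simp
      hence "cos (\<beta>/2)^2 < 1" using sc by linarith
      thus ?thesis by simp
    qed
    finally show "K^2 < cos (\<alpha>/2)^2" using ca2 by simp
  qed (use ca0 in simp)
  have K1: "K \<le> 1" using Kc cos_le_one[of "\<alpha>/2"] by linarith
  define c0 where "c0 = arccos K / sk"
  have c0h: "h < c0"
  proof -
    have "arccos (cos (\<alpha>/2)) < arccos K" using K0 Kc by (intro arccos_less_arccos) auto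
    moreover have "arccos (cos (\<alpha>/2)) = \<alpha>/2" using \<alpha>pi \<beta>0 \<beta>\<alpha> by (intro arccos_cos) auto
    ultimately have "h* sk < arccos K" unfolding \<alpha>_def by simp
    thus ?thesis unfolding c0_def using sk_pos by (simp add: field_simps)
  qed
  have "c0 \<le> model_circumradius k b1 b2 b3"
  proof (rule circ_lower[OF ms1])
    fix p assume pm: "p \<in> model_space k"
    obtain x y z where p: "p = (x,y,z)" by (cases p) auto
    have pn: "x^2 + y^2 + z^2 = R^2" using pm k R2 unfolding p model_space_def by simp
    define t1 where "t1 = k*(x*0 + y*0 + z*R)"
    define t2 where "t2 = k*(x*(R*u) + y*(R* v) + z*(R*c))"
    define t3 where "t3 = k*(x*(R*u) + y*(-(R* v)) + z*(R*c))"
    have avg: "t1/2 + t2/4 + t3/4 = (k*R) * (A*x + B*z)"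
      unfolding t1_def t2_def t3_def A_def B_def by (simp add: field_simps)
    have cs: "A*x + B*z \<le> K * R"
    proof -
      have "(A*x + B*z)^2 \<le> (A^2+B^2)*(x^2+z^2)"
      proof -
        have "(A^2+B^2)*(x^2+z^2) - (A*x + B*z)^2 = (A*z - B*x)^2" by (simp add: power2_eq_square algebra_simps)
        thus ?thesis by (smt (verit) zero_le_power2)
      qed
      also have "\<dots> \<le> (A^2+B^2)*R^2" using pn by (intro mult_left_mono) (auto, smt (verit) zero_le_power2)
      finally have "\<bar>A*x + B*z\<bar> \<le> sqrt ((A^2+B^2)*R^2)" using real_sqrt_le_mono by fastforce
      also have "\<dots> = K * R" unfolding K_def using R by (simp add: real_sqrt_mult)
      finally show ?thesis by simp
    qed
    have kR0: "0 < k*R" using k R by simp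
    have "t1/2 + t2/4 + t3/4 \<le> (k*R)*(K*R)" unfolding avg using cs kR0 by (intro mult_left_mono) auto
    also have "\<dots> = K" using kR by (simp add: algebra_simps)
    finally have "t1 \<le> K \<or> t2 \<le> K \<or> t3 \<le> K" by linarith
    hence "c0 \<le> arccos (max (-1) (min 1 t1)) / sk \<or> c0 \<le> arccos (max (-1) (min 1 t2)) / sk
           \<or> c0 \<le> arccos (max (-1) (min 1 t3)) / sk"
      unfolding c0_def using arccos_clip_ge[OF _ _ K1] K0 sk_pos
      by (metis divide_right_mono le_minus_one_simps(1) less_le order.trans)
    thus "c0 \<le> max (model_dist k p b1) (max (model_dist k p b2) (model_dist k p b3))"
      unfolding p b1_def b2_def b3_def md_pos[OF k] t1_def[symmetric] t2_def[symmetric] t3_def[symmetric]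
        sk_def[symmetric] by (rule max3_ge)
  qed
  hence "model_circumradius k b1 b2 b3 > h" using c0h by linarith
  thus ?thesis using ms1 ms2 ms3 d12 d13 d23 ball by blast
qed



lemma arcosh_clip_ge: "1 \<le> K \<Longrightarrow> K \<le> t \<Longrightarrow> arcosh K \<le> arcosh (max 1 (t::real))"
proof -
  assume a: "1 \<le> K" "K \<le> t"
  hence "max 1 t = t" by simp
  moreover have "arcosh K \<le> arcosh t"
    using a by (metis arcosh_real_strict_mono order_le_less)
  ultimately show ?thesis by simp
qed

lemma hyp_case:
  assumes k: "k < 0" and h: "h > 0" and e: "0 < e" "e \<le> 2*h"
  shows "\<exists>b1 b2 b3. b1 \<in> model_space k \<and> b2 \<in> model_space k \<and> b3 \<in> model_space k \<and>
     model_dist k b1 b2 = 2*h \<and> model_dist k b1 b3 = 2*h \<and> model_dist k b2 b3 = e \<and>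
     model_circumradius k b1 b2 b3 > h"
proof -
  define s where "s = sqrt (-k)"
  have s_pos: "s > 0" unfolding s_def using k by simp
  have ssq: "s * s = -k" unfolding s_def using k by simp
  define R where "R = 1 / s"
  have R: "R > 0" unfolding R_def using s_pos by simp
  have kR: "k * (R * R) = -1" unfolding R_def using s_pos ssq k by (simp add: field_simps)
  have R2: "R^2 = -1/k" using kR k by (simp add: power2_eq_square field_simps)
  define \<alpha> where "\<alpha> = 2*h * s"
  define \<beta> where "\<beta> = e * s"
  have \<beta>0: "0 < \<beta>" unfolding \<beta>_def using e s_pos by simp
  have \<beta>\<alpha>: "\<beta> \<le> \<alpha>" unfolding \<beta>_def \<alpha>_def using e s_pos by (intro mult_right_mono) auto
  define C where "C = cosh \<alpha>"
  have C1: "1 \<le> C" unfolding C_def by (rule cosh_real_ge_1)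
  have cle: "cosh (\<beta>/2) \<le> C" unfolding C_def using \<beta>0 \<beta>\<alpha>
    by (subst cosh_real_nonneg_le_iff) auto
  define v where "v = sinh (\<beta>/2)"
  define u where "u = sqrt (C^2 - cosh (\<beta>/2)^2)"
  have usq: "u^2 = C^2 - cosh (\<beta>/2)^2" unfolding u_def
  proof (intro real_sqrt_pow2)
    have "cosh (\<beta>/2)^2 \<le> C^2" using cle by (intro power_mono) auto
    thus "0 \<le> C^2 - cosh (\<beta>/2)^2" by simp
  qed
  have sc: "cosh (\<beta>/2)^2 = sinh (\<beta>/2)^2 + 1" by (rule cosh_square_eq)
  have cb: "cosh \<beta> = cosh (\<beta>/2)^2 + sinh (\<beta>/2)^2" using cosh_double[of "\<beta>/2"] by simp
  define b1 :: pt3 where "b1 = (0, 0, R)"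
  define b2 :: pt3 where "b2 = (R*u, R * v, R*C)"
  define b3 :: pt3 where "b3 = (R*u, -(R * v), R*C)"
  have ms1: "b1 \<in> model_space k" unfolding b1_def model_space_def using k R2 R by simp
  have "(R*u)^2 + (R * v)^2 - (R*C)^2 = R^2 * (u^2 + v^2 - C^2)" by (simp add: power_mult_distrib algebra_simps)
  also have "u^2 + v^2 - C^2 = -1" using usq sc unfolding v_def by simp
  finally have sq23: "(R*u)^2 + (R * v)^2 - (R*C)^2 = 1/k" using R2 by simp
  have RC: "R*C > 0" using R C1 by simp
  have ms2: "b2 \<in> model_space k" unfolding b2_def model_space_def using k sq23 RC by simp
  have ms3: "b3 \<in> model_space k" unfolding b3_def model_space_def using k sq23 RC by simp
  have ip12: "k*(0*(R*u) + 0*(R * v) - R*(R*C)) = C" using kR by (simp add: algebra_simps)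
  have ip13: "k*(0*(R*u) + 0*(-(R * v)) - R*(R*C)) = C" using kR by (simp add: algebra_simps)
  have ip23: "k*((R*u)*(R*u) + (R * v)*(-(R * v)) - (R*C)*(R*C)) = cosh \<beta>"
  proof -
    have "k*((R*u)*(R*u) + (R * v)*(-(R * v)) - (R*C)*(R*C)) = (k*(R*R)) * (u^2 - v^2 - C^2)"
      by (simp add: power2_eq_square algebra_simps)
    also have "\<dots> = -(u^2 - v^2 - C^2)" using kR by simp
    also have "\<dots> = cosh \<beta>" using usq cb unfolding v_def by simp
    finally show ?thesis .
  qed
  have d12: "model_dist k b1 b2 = 2*h"
    unfolding b1_def b2_def md_neg[OF k] ip12 using C1 \<beta>0 \<beta>\<alpha>
    by (simp add: C_def arcosh_cosh_real \<alpha>_def s_def[symmetric]) (use s_pos in simp)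
  have d13: "model_dist k b1 b3 = 2*h"
    unfolding b1_def b3_def md_neg[OF k] ip13 using C1 \<beta>0 \<beta>\<alpha>
    by (simp add: C_def arcosh_cosh_real \<alpha>_def s_def[symmetric]) (use s_pos in simp)
  have d23: "model_dist k b2 b3 = e"
    unfolding b2_def b3_def md_neg[OF k] ip23 using \<beta>0 \<beta>\<alpha> cosh_real_ge_1[of \<beta>]
    by (simp add: arcosh_cosh_real \<beta>_def s_def[symmetric]) (use s_pos in simp)
  define A where "A = u/2"
  define B where "B = (1+C)/2"
  define Q where "Q = B^2 - A^2"
  have ca2: "cosh (\<alpha>/2)^2 = (1+C)/2"
    using cosh_double_cosh[of "\<alpha>/2"] unfolding C_def by simp
  have sb0: "0 < sinh (\<beta>/2)" using \<beta>0 by simp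
  have Qc: "cosh (\<alpha>/2)^2 < Q"
  proof -
    have "Q = ((1+C)^2 - u^2)/4" unfolding Q_def A_def B_def by (simp add: power_divide field_simps)
    also have "\<dots> = (cosh (\<beta>/2)^2 + 1 + 2*C)/4" using usq by (simp add: power2_eq_square field_simps)
    finally have "Q = (cosh (\<beta>/2)^2 + 1 + 2*C)/4" .
    hence "Q - cosh (\<alpha>/2)^2 = sinh (\<beta>/2)^2/4" using sc ca2 by (simp add: field_simps)
    moreover have "sinh (\<beta>/2)^2 > 0" using sb0 by simp
    ultimately show ?thesis using [[show_sorts]] by linarith
  qed
  have Q0: "0 \<le> Q" using Qc zero_le_power2[of "cosh (\<alpha>/2)"] by linarith
  define K where "K = sqrt Q"
  have K2: "K^2 = Q" unfolding K_def using Q0 by simp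
  have K0: "0 \<le> K" unfolding K_def using Q0 by simp
  have Kc: "cosh (\<alpha>/2) < K"
  proof (rule power_less_imp_less_base[of _ 2])
    show "cosh (\<alpha>/2)^2 < K^2" unfolding K2 by (rule Qc)
  qed (rule K0)
  have K1: "1 \<le> K" using Kc cosh_real_ge_1[of "\<alpha>/2"] by linarith
  define c0 where "c0 = arcosh K / s"
  have c0h: "h < c0"
  proof -
    have "arcosh (cosh (\<alpha>/2)) < arcosh K" using Kc cosh_real_ge_1[of "\<alpha>/2"]
      by (intro arcosh_real_strict_mono) auto
    moreover have "arcosh (cosh (\<alpha>/2)) = \<alpha>/2" using \<beta>0 \<beta>\<alpha> by (intro arcosh_cosh_real) auto
    ultimately have "h * s < arcosh K" unfolding \<alpha>_def by simp
    thus ?thesis unfolding c0_def using s_pos by (simp add: field_simps)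
  qed
  have BA: "\<bar>A\<bar> < B"
  proof -
    have "A^2 < B^2" using Qc zero_le_power2[of "cosh (\<alpha>/2)"] unfolding Q_def by linarith
    moreover have "0 < B" unfolding B_def using C1 by simp
    ultimately show ?thesis using power_less_imp_less_base[of "\<bar>A\<bar>" 2 B] by simp
  qed
  have "c0 \<le> model_circumradius k b1 b2 b3"
  proof (rule circ_lower[OF ms1])
    fix p assume pm: "p \<in> model_space k"
    obtain x y z where p: "p = (x,y,z)" by (cases p) auto
    have pn: "x^2 + y^2 - z^2 = -(R^2)" and z0: "z > 0" using pm k R2 unfolding p model_space_def by auto
    define t1 where "t1 = k*(x*0 + y*0 - z*R)"
    define t2 where "t2 = k*(x*(R*u) + y*(R * v) - z*(R*C))"
    define t3 where "t3 = k*(x*(R*u) + y*(-(R * v)) - z*(R*C))"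
    have avg: "t1/2 + t2/4 + t3/4 = (-k*R) * (B*z - A*x)"
      unfolding t1_def t2_def t3_def A_def B_def by (simp add: field_simps)
    have cs: "K * R \<le> B*z - A*x"
    proof -
      have "x^2 \<le> z^2" using pn zero_le_power2[of y] zero_le_power2[of R] by linarith
      hence "\<bar>x\<bar>^2 \<le> z^2" by simp
      hence zx: "\<bar>x\<bar> \<le> z" using power2_le_imp_le[of "\<bar>x\<bar>" z] z0 by simp
      have "A*x \<le> \<bar>A\<bar>*\<bar>x\<bar>" using abs_ge_self[of "A*x"] by (simp add: abs_mult)
      also have "\<dots> \<le> B*z"
        by (rule mult_mono) (use BA zx abs_ge_zero[of A] abs_ge_zero[of x] in linarith)+
      finally have w0: "0 \<le> B*z - A*x" by simp
      have "(B^2-A^2)*(z^2-x^2) \<le> (B*z - A*x)^2"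
      proof -
        have "(B*z - A*x)^2 - (B^2-A^2)*(z^2-x^2) = (B*x - A*z)^2" by (simp add: power2_eq_square algebra_simps)
        thus ?thesis using zero_le_power2[of "B*x - A*z"] by linarith
      qed
      moreover have "Q*R^2 \<le> (B^2-A^2)*(z^2-x^2)"
      proof -
        have "R^2 \<le> z^2 - x^2" using pn zero_le_power2[of y] by linarith
        thus ?thesis using Q0 unfolding Q_def by (rule mult_left_mono)
      qed
      moreover have "(K*R)^2 = Q*R^2" using K2 by (simp add: power_mult_distrib)
      ultimately have "(K*R)^2 \<le> (B*z - A*x)^2" by linarith
      thus ?thesis using w0 by (rule power2_le_imp_le)
    qed
    have kR0: "0 < -k*R" using k R by (simp add: mult_neg_pos)
    have "K = (-k*R)*(K*R)" using kR by (simp add: algebra_simps)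
    also have "\<dots> \<le> t1/2 + t2/4 + t3/4" unfolding avg using cs kR0 by (intro mult_left_mono) auto
    finally have "K \<le> t1 \<or> K \<le> t2 \<or> K \<le> t3" by linarith
    hence "c0 \<le> arcosh (max 1 t1) / s \<or> c0 \<le> arcosh (max 1 t2) / s
           \<or> c0 \<le> arcosh (max 1 t3) / s"
      unfolding c0_def using arcosh_clip_ge[OF K1] s_pos divide_right_mono[of "arcosh K" _ s]
      by (metis less_imp_le)
    thus "c0 \<le> max (model_dist k p b1) (max (model_dist k p b2) (model_dist k p b3))"
      unfolding p b1_def b2_def b3_def md_neg[OF k] t1_def[symmetric] t2_def[symmetric] t3_def[symmetric]
        s_def[symmetric] by (rule max3_ge)
  qed
  hence "model_circumradius k b1 b2 b3 > h" using c0h by linarith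
  thus ?thesis using ms1 ms2 ms3 d12 d13 d23 by blast
qed



lemma model_tri:
  assumes h: "h > 0" and e: "0 < e" "e \<le> 2*h" and small: "k > 0 \<longrightarrow> 4*h* sqrt k < pi"
  shows "\<exists>b1 b2 b3. b1 \<in> model_space k \<and> b2 \<in> model_space k \<and> b3 \<in> model_space k \<and>
     model_dist k b1 b2 = 2*h \<and> model_dist k b1 b3 = 2*h \<and> model_dist k b2 b3 = e \<and>
     (k > 0 \<longrightarrow> (\<exists>c\<in>model_space k. model_dist k c b1 < pi / (2 * sqrt k) \<and>
                       model_dist k c b2 < pi / (2 * sqrt k) \<and>
                       model_dist k c b3 < pi / (2 * sqrt k))) \<and>
     model_circumradius k b1 b2 b3 > h"
proof (cases "k = 0")
  case True thus ?thesis using euclid_case[OF h e] by simp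
next
  case False
  show ?thesis
  proof (cases "k > 0")
    case True thus ?thesis using sphere_case[OF True h e] small by auto
  next
    case False
    hence "k < 0" using \<open>k \<noteq> 0\<close> by simp
    thus ?thesis using hyp_case[OF _ h e] False by blast
  qed
qed

lemma core:
  fixes q p y y' :: "'a::metric_space"
  assumes curv: "curv_ge TYPE('a) k" and h: "h > 0" and small: "k > 0 \<longrightarrow> 4*h* sqrt k < pi"
    and qp: "dist q p = h" and py: "dist p y = h" and py': "dist p y' = h"
    and qy: "dist q y = 2*h" and qy': "dist q y' = 2*h"
  shows "y = y'"
proof (rule ccontr)
  assume ne: "y \<noteq> y'"
  define e where "e = dist y y'"
  have e0: "0 < e" unfolding e_def using ne by simp
  have e2: "e \<le> 2*h" unfolding e_def using dist_triangle[of y y' p] py py' by (simp add: dist_commute)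
  obtain b1 b2 b3 where b: "b1 \<in> model_space k" "b2 \<in> model_space k" "b3 \<in> model_space k"
    "model_dist k b1 b2 = 2*h" "model_dist k b1 b3 = 2*h" "model_dist k b2 b3 = e"
    "k > 0 \<longrightarrow> (\<exists>c\<in>model_space k. model_dist k c b1 < pi / (2 * sqrt k) \<and>
                       model_dist k c b2 < pi / (2 * sqrt k) \<and>
                       model_dist k c b3 < pi / (2 * sqrt k))"
    "model_circumradius k b1 b2 b3 > h"
    using model_tri[OF h e0 e2 small] by blast
  have ct: "comparison_triangle k q y y' b1 b2 b3"
    unfolding comparison_triangle_def using b qy qy' e_def by simp
  have "circumradius q y y' \<ge> model_circumradius k b1 b2 b3"
    using curv ct b(7) unfolding curv_ge_def by blast
  moreover have "circumradius q y y' \<le> h"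
  proof -
    have "circumradius q y y' \<le> max (dist p q) (max (dist p y) (dist p y'))"
      unfolding circumradius_def
      by (rule cINF_lower) (auto intro!: bdd_belowI[of _ 0] simp: le_max_iff_disj)
    thus ?thesis using qp py py' by (simp add: dist_commute)
  qed
  ultimately show False using b(8) by linarith
qed



lemma two_h:
  fixes x q Y w :: "'a::metric_space"
  assumes "dist x w = a + b" "dist x q \<le> a + s - 2*h" "dist Y w = b - s" "dist q Y \<le> 2*h"
  shows "dist q Y = 2*h"
proof -
  have "dist x w \<le> dist x q + dist q Y + dist Y w"
    using dist_triangle[of x w q] dist_triangle[of q w Y] by linarith
  thus ?thesis using assms by linarith
qed

theorem mainTheorem9:
  fixes k :: real
  assumes "geodesic_space TYPE('a::metric_space)"
    and "curv_ge TYPE('a) k"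
  shows "non_branching TYPE('a)"
  unfolding non_branching_def
proof (intro allI impI)
  fix x y y' :: 'a
  assume D: "dist x y = dist x y'" and "\<exists>t\<in>{0<..<1}. Zt t x y \<inter> Zt t x y' \<noteq> {}"
  then obtain t z where t: "0 < t" "t < 1" and zy: "z \<in> Zt t x y" and zy': "z \<in> Zt t x y'" by auto
  define DD where "DD = dist x y"
  show "y = y'"
  proof (cases "DD = 0")
    case True thus ?thesis using D unfolding DD_def by (metis dist_eq_0_iff)
  next
    case False
    hence DD0: "DD > 0" unfolding DD_def by simp
    define a where "a = t * DD"
    define b where "b = (1 - t) * DD"
    have a0: "a > 0" unfolding a_def using t DD0 by simp
    have b0: "b > 0" unfolding b_def using t DD0 by simp
    have ab: "DD = a + b" unfolding a_def b_def by (simp add: algebra_simps)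
    have xz: "dist x z = a" using zy unfolding Zt_def a_def DD_def by simp
    have zyb: "dist z y = b" using zy unfolding Zt_def b_def DD_def by simp
    have zyb': "dist z y' = b" using zy' D unfolding Zt_def b_def DD_def by simp
    have xy: "dist x y = a + b" using ab unfolding DD_def by simp
    have xy': "dist x y' = a + b" using ab D unfolding DD_def by simp
    have geo: "\<And>u w::'a. \<exists>g::real \<Rightarrow> 'a. g 0 = u \<and> g (dist u w) = w \<and>
        (\<forall>s\<in>{0..dist u w}. \<forall>r\<in>{0..dist u w}. dist (g s) (g r) = \<bar>s - r\<bar>)"
      using assms(1) unfolding geodesic_space_def by blast
    obtain g where g0: "g 0 = z" and gb: "g b = y" and giso: "\<And>s r. s\<in>{0..b} \<Longrightarrow> r\<in>{0..b} \<Longrightarrow> dist (g s) (g r) = \<bar>s - r\<bar>"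
      using geo[of z y] zyb by metis
    obtain g' where g0': "g' 0 = z" and gb': "g' b = y'" and giso': "\<And>s r. s\<in>{0..b} \<Longrightarrow> r\<in>{0..b} \<Longrightarrow> dist (g' s) (g' r) = \<bar>s - r\<bar>"
      using geo[of z y'] zyb' by metis
    obtain \<sigma> where s0: "\<sigma> 0 = z" and sa: "\<sigma> a = x" and siso: "\<And>s r. s\<in>{0..a} \<Longrightarrow> r\<in>{0..a} \<Longrightarrow> dist (\<sigma> s) (\<sigma> r) = \<bar>s - r\<bar>"
      using geo[of z x] xz by (metis dist_commute)
    obtain N :: nat where N: "max (b/a) (4*b* sqrt \<bar>k\<bar> / pi) < real N"
      using reals_Archimedean2 by blast
    have Npos: "real N > 0" using N a0 b0 by (smt (verit) divide_pos_pos)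
    define h where "h = b / real N"
    have h0: "h > 0" unfolding h_def using b0 Npos by simp
    have Nh: "real N * h = b" unfolding h_def using Npos by simp
    have ha: "h \<le> a"
    proof -
      have "b < real N * a" using N a0 by (simp add: field_simps)
      thus ?thesis unfolding h_def using Npos by (simp add: field_simps)
    qed
    have small: "k > 0 \<longrightarrow> 4*h* sqrt k < pi"
    proof
      assume k: "k > 0"
      have "4*b* sqrt k < real N * pi" using N k pi_gt_zero by (simp add: field_simps)
      thus "4*h* sqrt k < pi" unfolding h_def using Npos by (simp add: field_simps)
    qed
    have key: "j \<le> N \<Longrightarrow> g (real j * h) = g' (real j * h)" for j
    proof (induction j)
      case 0 thus ?case using g0 g0' by simp
    next
      case (Suc j)
      hence jN: "j < N" by simp
      have pe: "g (real j * h) = g' (real j * h)" using Suc by simp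
      define p where "p = g (real j * h)"
      define s where "s = real (Suc j) * h"
      have sj: "s = real j * h + h" unfolding s_def by (simp add: algebra_simps)
      have sb: "s \<le> b" unfolding s_def using Suc.prems Nh h0
        by (metis mult_right_mono of_nat_le_iff less_imp_le)
      have jh0: "0 \<le> real j * h" using h0 by simp
      have jhb: "real j * h \<le> b" using sb sj h0 by linarith
      have s0': "0 \<le> s" using jh0 sj h0 by linarith
      define q where "q = (if j = 0 then \<sigma> h else g (real j * h - h))"
      have qp: "dist q p = h"
      proof (cases "j = 0")
        case True
        thus ?thesis unfolding q_def p_def using siso[of h 0] g0 s0 h0 ha by simp
      next
        case False
        hence "h \<le> real j * h" using h0 by simp
        thus ?thesis unfolding q_def p_def using False giso[of "real j * h - h" "real j * h"] jhb h0 by simp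
      qed
      have xq: "dist x q \<le> a + s - 2*h"
      proof (cases "j = 0")
        case True
        hence "dist x q = a - h" unfolding q_def using siso[of a h] sa h0 ha a0 by (simp add: dist_commute)
        thus ?thesis using True sj by simp
      next
        case False
        hence jh: "h \<le> real j * h" using h0 by simp
        have "dist z q = real j * h - h" unfolding q_def using False g0 giso[of 0 "real j * h - h"] jh jhb h0 by simp
        hence "dist x q \<le> a + (real j * h - h)" using dist_triangle[of x q z] xz by linarith
        thus ?thesis using sj by simp
      qed
      have pY: "dist p (g s) = h" unfolding p_def using giso[of "real j * h" s] jh0 jhb sb sj h0 by simp
      have pY': "dist p (g' s) = h" unfolding p_def pe using giso'[of "real j * h" s] jh0 jhb sb sj h0 by simp
      have Yw: "dist (g s) y = b - s" using giso[of s b] gb sb s0' b0 by simp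
      have Yw': "dist (g' s) y' = b - s" using giso'[of s b] gb' sb s0' b0 by simp
      have qY: "dist q (g s) = 2*h"
        using two_h[OF xy xq Yw] dist_triangle[of q "g s" p] qp pY by linarith
      have qY': "dist q (g' s) = 2*h"
        using two_h[OF xy' xq Yw'] dist_triangle[of q "g' s" p] qp pY' by linarith
      have "g s = g' s" using core[OF assms(2) h0 small qp pY pY' qY qY'] .
      thus ?case unfolding s_def .
    qed
    have "g (real N * h) = g' (real N * h)" using key by simp
    thus ?thesis using Nh gb gb' by simp
  qed
qed


end
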